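(* Let $0<\lambda<1$, $0<\beta<1$, and put $D=-3\lambda^2+4\beta^2+4\lambda-4\beta$. (1) If $(\lambda,\beta)\in P$, then the set of nonzero idempotents of $\mathcal{B}'(\lambda,\beta)$ is $\{o,\ a,\ b,\ o+(1-2\lambda)a,\ o+(1-2\lambda)b\}$. (2) If $(\lambda,\beta)\notin P$ (equivalently $D\neq 0$), then the set of nonzero idempotents of $\mathcal{B}'(\lambda,\beta)$ is $\{o,\ a,\ b,\ o+(1-2\lambda)a,\ o+(1-2\lambda)b,\ j_0,\ j_1\}\setminus\{0\}$, where for $\varepsilon\in\{0,1\}$ $$j_\varepsilon=\varepsilon\, o+\frac{\lambda(1-2\varepsilon\lambda)}{D}(2\beta-\lambda)\,a+\frac{\lambda(1-2\varepsilon\lambda)}{D}(2-2\beta-\lambda)\,b+2\Big(\frac{\lambda(1-2\varepsilon\lambda)}{D}\Big)^2(2\beta-\lambda)(2-2\beta-\lambda)\,c.$$ (Elements in these lists may coincide for special parameter values.)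
   Context: For real parameters $0<\lambda<1$ and $0<\beta<1$, $\mathcal{B}'(\lambda,\beta)$ denotes the commutative (non-associative) $4$-dimensional real algebra with basis $\{o,a,b,c\}$ whose bilinear commutative multiplication $\circ$ is determined by $o\circ o=o$, $o\circ a=\lambda a$, $o\circ b=\lambda b$, $a\circ a=a$, $b\circ b=b$, $a\circ b=\frac{\lambda-\beta}{\lambda}a+\frac{\lambda+\beta-1}{\lambda}b+c$, and $c\circ x=x\circ c=0$ for every $x$. (In the paper the basis vector $c$ is written $ab$.) An element $x$ is idempotent if $x\circ x=x$. The set $P$ is $P=\{(\lambda,\beta)\mid 0<\lambda\le \tfrac13,\ \beta=\tfrac12\big(1\pm\sqrt{(1-\lambda)(1-3\lambda)}\big)\}$; for $0<\lambda<1$, $0<\beta<1$ one has $(\lambda,\beta)\in P$ iff $-3\lambda^2+4\beta^2+4\lambda-4\beta=0$. *)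

theory Defs
  imports Complex_Main
begin

text \<open>Basis of the 4-dimensional algebra B'(lambda,beta): o, a, b, c (c is written ab in the paper).
  Elements are coordinate functions bas => real.\<close>

datatype bas = Bo | Ba | Bb | Bc

type_synonym elt = "bas \<Rightarrow> real"

definition mk :: "real \<Rightarrow> real \<Rightarrow> real \<Rightarrow> real \<Rightarrow> elt" where
  "mk x0 x1 x2 x3 = (\<lambda>k. case k of Bo \<Rightarrow> x0 | Ba \<Rightarrow> x1 | Bb \<Rightarrow> x2 | Bc \<Rightarrow> x3)"

definition zeroE :: elt where "zeroE = mk 0 0 0 0"

fun table :: "real \<Rightarrow> real \<Rightarrow> bas \<Rightarrow> bas \<Rightarrow> elt" where
  "table l be Bo Bo = mk 1 0 0 0"
| "table l be Bo Ba = mk 0 l 0 0"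
| "table l be Ba Bo = mk 0 l 0 0"
| "table l be Bo Bb = mk 0 0 l 0"
| "table l be Bb Bo = mk 0 0 l 0"
| "table l be Ba Ba = mk 0 1 0 0"
| "table l be Bb Bb = mk 0 0 1 0"
| "table l be Ba Bb = mk 0 ((l - be) / l) ((l + be - 1) / l) 1"
| "table l be Bb Ba = mk 0 ((l - be) / l) ((l + be - 1) / l) 1"
| "table l be Bc x = zeroE"
| "table l be x Bc = zeroE"

definition mult :: "real \<Rightarrow> real \<Rightarrow> elt \<Rightarrow> elt \<Rightarrow> elt" where
  "mult l be x y = (\<lambda>k. \<Sum>i\<in>{Bo,Ba,Bb,Bc}. \<Sum>j\<in>{Bo,Ba,Bb,Bc}. x i * y j * table l be i j k)"

definition nonzero_idempotents :: "real \<Rightarrow> real \<Rightarrow> elt set" where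
  "nonzero_idempotents l be = {x. x \<noteq> zeroE \<and> mult l be x x = x}"

definition P_set :: "(real \<times> real) set" where
  "P_set = {(l, be). 0 < l \<and> l \<le> 1/3 \<and>
      (be = (1 + sqrt ((1 - l) * (1 - 3*l))) / 2 \<or> be = (1 - sqrt ((1 - l) * (1 - 3*l))) / 2)}"

definition Dval :: "real \<Rightarrow> real \<Rightarrow> real" where
  "Dval l be = -3*l^2 + 4*be^2 + 4*l - 4*be"

definition jeps :: "real \<Rightarrow> real \<Rightarrow> real \<Rightarrow> elt" where
  "jeps l be e = (let t = l * (1 - 2*e*l) / Dval l be in
     mk e (t * (2*be - l)) (t * (2 - 2*be - l)) (2 * t^2 * (2*be - l) * (2 - 2*be - l)))"

end

theory Submission imports Defs begin

lemma mk_app[simp]: "mk a b c d Bo = a" "mk a b c d Ba = b" "mk a b c d Bb = c" "mk a b c d Bc = d"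
  by (simp_all add: mk_def)

lemma mk_eq_iff: "mk a b c d = mk a' b' c' d' \<longleftrightarrow> a=a' \<and> b=b' \<and> c=c' \<and> d=d'"
proof
  assume h: "mk a b c d = mk a' b' c' d'"
  show "a=a' \<and> b=b' \<and> c=c' \<and> d=d'"
    using fun_cong[OF h, of Bo] fun_cong[OF h, of Ba] fun_cong[OF h, of Bb] fun_cong[OF h, of Bc] by simp
qed simp

lemma all_mk: "x = mk (x Bo) (x Ba) (x Bb) (x Bc)"
  by (rule ext, case_tac xa) simp_all

lemma sq: "mult l be (mk a b c d) (mk a b c d) =
  mk (a^2) (2*l*a*b + b^2 + 2*b*c*((l-be)/l)) (2*l*a*c + c^2 + 2*b*c*((l+be-1)/l)) (2*b*c)"
  apply (rule ext)
  apply (case_tac x)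
  apply (simp_all add: mult_def zeroE_def mk_def algebra_simps power2_eq_square)
  done


lemma P_iff: assumes "0 < l" "l < 1" shows "(l,be) \<in> P_set \<longleftrightarrow> Dval l be = 0"
proof
  assume "(l,be) \<in> P_set"
  then have l3: "l \<le> 1/3" and hb: "be = (1 + sqrt ((1 - l) * (1 - 3*l))) / 2 \<or> be = (1 - sqrt ((1 - l) * (1 - 3*l))) / 2"
    by (auto simp: P_set_def)
  have nn: "(1 - l) * (1 - 3*l) \<ge> 0" using l3 assms by auto
  have r: "(sqrt ((1 - l) * (1 - 3*l)))^2 = (1 - l) * (1 - 3*l)" using nn by simp
  define R where "R = sqrt ((1 - l) * (1 - 3*l))"
  have hb': "2*be - 1 = R \<or> 2*be - 1 = -R" using hb unfolding R_def by auto
  have "(2*be - 1)^2 = R^2" using hb' by auto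
  then have "(2*be - 1)^2 = (1 - l) * (1 - 3*l)" using r unfolding R_def by simp
  then show "Dval l be = 0" by (simp add: Dval_def power2_eq_square algebra_simps)
next
  assume "Dval l be = 0"
  then have e: "(2*be - 1)^2 = (1 - l) * (1 - 3*l)" by (simp add: Dval_def power2_eq_square algebra_simps)
  then have nn: "(1 - l) * (1 - 3*l) \<ge> 0" by (metis zero_le_power2)
  have l3: "l \<le> 1/3"
  proof (rule ccontr)
    assume "\<not> l \<le> 1/3"
    hence "(1-l)*(1-3*l) < 0" using assms by (intro mult_pos_neg) auto
    thus False using nn by simp
  qed
  have "sqrt ((1 - l) * (1 - 3*l)) = \<bar>2*be - 1\<bar>" using e by (metis real_sqrt_abs)
  then have "be = (1 + sqrt ((1 - l) * (1 - 3*l))) / 2 \<or> be = (1 - sqrt ((1 - l) * (1 - 3*l))) / 2"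
    by (auto simp: abs_if)
  then show "(l,be) \<in> P_set" using assms l3 by (auto simp: P_set_def)
qed

lemma classify:
  assumes l: "0 < l" and i0: "a^2 = a" and i1: "2*l*a*b + b^2 + 2*b*c*((l-be)/l) = b"
    and i2: "2*l*a*c + c^2 + 2*b*c*((l+be-1)/l) = c" and i3: "2*b*c = d"
  shows "(a=0 \<or> a=1) \<and> d = 2*b*c \<and> ((b=0\<and>c=0) \<or> (b=0 \<and> c=1-2*l*a) \<or> (c=0 \<and> b=1-2*l*a) \<or>
     (b\<noteq>0 \<and> c\<noteq>0 \<and> Dval l be*b = l*(1-2*l*a)*(2*be-l) \<and> Dval l be*c = l*(1-2*l*a)*(2-2*be-l)))"
proof -
  have a: "a=0 \<or> a=1" using i0 by (metis power2_eq_square mult_cancel_right1 mult_eq_0_iff eq_iff_diff_eq_0 right_diff_distrib' mult.commute)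
  have j1: "b * (l*b + 2*c*(l-be) - l*(1-2*l*a)) = 0" using i1 l by (simp add: field_simps power2_eq_square)
  have j2: "c * (l*c + 2*b*(l+be-1) - l*(1-2*l*a)) = 0" using i2 l by (simp add: field_simps power2_eq_square)
  have "(b=0\<and>c=0) \<or> (b=0 \<and> c=1-2*l*a) \<or> (c=0 \<and> b=1-2*l*a) \<or>
     (b\<noteq>0 \<and> c\<noteq>0 \<and> Dval l be*b = l*(1-2*l*a)*(2*be-l) \<and> Dval l be*c = l*(1-2*l*a)*(2-2*be-l))"
  proof (cases "b=0")
    case True
    then show ?thesis using j2 l by auto
  next
    case bn: False
    show ?thesis
    proof (cases "c=0")
      case True then show ?thesis using j1 l bn by auto
    next
      case cn: False
      have k1: "l*b + 2*c*(l-be) - l*(1-2*l*a) = 0" using j1 bn by simp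
      have k2: "l*c + 2*b*(l+be-1) - l*(1-2*l*a) = 0" using j2 cn by simp
      have "Dval l be*b = l*(1-2*l*a)*(2*be-l)" unfolding Dval_def using k1 k2 by algebra
      moreover have "Dval l be*c = l*(1-2*l*a)*(2-2*be-l)" unfolding Dval_def using k1 k2 by algebra
      ultimately show ?thesis using bn cn by simp
    qed
  qed
  then show ?thesis using a i3 by auto
qed

lemma jeps_idem:
  assumes l: "0 < l" and D: "Dval l be \<noteq> 0" and e: "e = 0 \<or> e = 1"
  shows "mult l be (jeps l be e) (jeps l be e) = jeps l be e"
proof -
  define t where "t = l * (1 - 2*e*l) / Dval l be"
  have tD: "t * Dval l be = l*(1-2*e*l)" using D by (simp add: t_def)
  have e2: "e^2 = e" using e by auto
  have j: "jeps l be e = mk e (t * (2*be - l)) (t * (2 - 2*be - l)) (2 * t^2 * (2*be - l) * (2 - 2*be - l))"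
    by (simp add: jeps_def t_def Let_def)
  have q1: "l*(2*l*e*(t * (2*be - l)) + (t * (2*be - l))^2) + 2*(t * (2*be - l))*(t * (2 - 2*be - l))*(l-be) = l*(t * (2*be - l))"
    using tD unfolding Dval_def by algebra
  have q2: "l*(2*l*e*(t * (2 - 2*be - l)) + (t * (2 - 2*be - l))^2) + 2*(t * (2*be - l))*(t * (2 - 2*be - l))*(l+be-1) = l*(t * (2 - 2*be - l))"
    using tD unfolding Dval_def by algebra
  show ?thesis unfolding j sq mk_eq_iff using e2 q1 q2 l
    by (simp add: field_simps power2_eq_square)
qed


lemma idem_iff: "mult l be (mk a b c d) (mk a b c d) = mk a b c d \<longleftrightarrow>
  (a^2 = a \<and> 2*l*a*b + b^2 + 2*b*c*((l-be)/l) = b \<and> 2*l*a*c + c^2 + 2*b*c*((l+be-1)/l) = c \<and> 2*b*c = d)"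
  by (simp add: sq mk_eq_iff)

lemma zeroE_mk: "zeroE = mk 0 0 0 0" by (simp add: zeroE_def)

lemma fwd:
  assumes l: "0 < l" "l < 1" and x: "mk a b c d \<in> nonzero_idempotents l be"
  shows "mk a b c d \<in> {mk 1 0 0 0, mk 0 1 0 0, mk 0 0 1 0, mk 1 (1 - 2*l) 0 0, mk 1 0 (1 - 2*l) 0}
     \<or> (Dval l be \<noteq> 0 \<and> (mk a b c d = jeps l be 0 \<or> mk a b c d = jeps l be 1))"
proof -
  have nz: "\<not> (a = 0 \<and> b = 0 \<and> c = 0 \<and> d = 0)" using x by (auto simp: nonzero_idempotents_def zeroE_mk mk_eq_iff)
  have id: "a^2 = a" "2*l*a*b + b^2 + 2*b*c*((l-be)/l) = b" "2*l*a*c + c^2 + 2*b*c*((l+be-1)/l) = c" "2*b*c = d"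
    using x by (auto simp: nonzero_idempotents_def idem_iff)
  note C = classify[OF l(1) id]
  then have a: "a = 0 \<or> a = 1" and d: "d = 2*b*c" by auto
  show ?thesis
  proof (cases "b\<noteq>0 \<and> c\<noteq>0 \<and> Dval l be*b = l*(1-2*l*a)*(2*be-l) \<and> Dval l be*c = l*(1-2*l*a)*(2-2*be-l)")
    case False
    then have "(b=0\<and>c=0) \<or> (b=0 \<and> c=1-2*l*a) \<or> (c=0 \<and> b=1-2*l*a)" using C by blast
    then show ?thesis using a d nz by (auto simp: mk_eq_iff)
  next
    case True
    have Dn: "Dval l be \<noteq> 0"
    proof
      assume D0: "Dval l be = 0"
      have s: "1 - 2*l*a \<noteq> 0"
      proof
        assume "1 - 2*l*a = 0"
        then have l2: "l = 1/2" using a by auto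
        have "Dval l be = (2*be-1)^2 + 1/4" unfolding Dval_def l2 by (simp add: power2_eq_square algebra_simps)
        moreover have "(2*be-1)^2 + 1/4 > (0::real)" by (simp add: add_nonneg_pos)
        ultimately show False using D0 by simp
      qed
      have "l*(1-2*l*a)*(2*be-l) = 0" "l*(1-2*l*a)*(2-2*be-l) = 0" using True D0 by auto
      then have "2*be-l = 0" "2-2*be-l = 0" using s l by auto
      then show False using l by simp
    qed
    define t where "t = l * (1 - 2*a*l) / Dval l be"
    have b: "b = t*(2*be-l)" using True Dn unfolding t_def by (simp add: field_simps)
    have c: "c = t*(2-2*be-l)" using True Dn unfolding t_def by (simp add: field_simps)
    have "mk a b c d = jeps l be a"
      unfolding jeps_def Let_def t_def[symmetric] mk_eq_iff using b c d by (simp add: power2_eq_square)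
    then show ?thesis using a Dn by auto
  qed
qed

lemma five_in:
  assumes l: "0 < l" "l < 1"
  shows "{mk 1 0 0 0, mk 0 1 0 0, mk 0 0 1 0, mk 1 (1 - 2*l) 0 0, mk 1 0 (1 - 2*l) 0} \<subseteq> nonzero_idempotents l be"
  using l by (auto simp: nonzero_idempotents_def idem_iff zeroE_mk mk_eq_iff power2_eq_square algebra_simps)

theorem mainTheorem2:
  fixes l be :: real
  assumes "0 < l" "l < 1" "0 < be" "be < 1"
  shows "((l, be) \<in> P_set \<longrightarrow>
           nonzero_idempotents l be =
             {mk 1 0 0 0, mk 0 1 0 0, mk 0 0 1 0, mk 1 (1 - 2*l) 0 0, mk 1 0 (1 - 2*l) 0})
       \<and> ((l, be) \<notin> P_set \<longrightarrow>
           nonzero_idempotents l be =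
             {mk 1 0 0 0, mk 0 1 0 0, mk 0 0 1 0, mk 1 (1 - 2*l) 0 0, mk 1 0 (1 - 2*l) 0,
              jeps l be 0, jeps l be 1} - {zeroE})"
proof -
  let ?F = "{mk 1 0 0 0, mk 0 1 0 0, mk 0 0 1 0, mk 1 (1 - 2*l) 0 0, mk 1 0 (1 - 2*l) 0}"
  have F: "?F \<subseteq> nonzero_idempotents l be" using five_in assms(1,2) .
  have A: "nonzero_idempotents l be = ?F" if "(l, be) \<in> P_set"
  proof -
    note that
    then have D0: "Dval l be = 0" using P_iff assms(1,2) by blast
    show ?thesis
    proof
      show "nonzero_idempotents l be \<subseteq> ?F"
      proof
        fix x assume "x \<in> nonzero_idempotents l be"
        then have "mk (x Bo) (x Ba) (x Bb) (x Bc) \<in> nonzero_idempotents l be" using all_mk[of x] by simp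
        from fwd[OF assms(1,2) this] D0 have "mk (x Bo) (x Ba) (x Bb) (x Bc) \<in> ?F" by blast
        then show "x \<in> ?F" using all_mk[of x] by simp
      qed
    qed (rule F)
  qed
  have B: "nonzero_idempotents l be = (?F \<union> {jeps l be 0, jeps l be 1}) - {zeroE}" if "(l, be) \<notin> P_set"
  proof -
    note that
    then have Dn: "Dval l be \<noteq> 0" using P_iff assms(1,2) by blast
    have J: "jeps l be e \<in> nonzero_idempotents l be" if "e = 0 \<or> e = 1" "jeps l be e \<noteq> zeroE" for e
      using jeps_idem[OF assms(1) Dn that(1)] that(2) by (simp add: nonzero_idempotents_def)
    have Z: "zeroE \<notin> nonzero_idempotents l be" by (simp add: nonzero_idempotents_def)
    show ?thesis
    proof
      show "nonzero_idempotents l be \<subseteq> (?F \<union> {jeps l be 0, jeps l be 1}) - {zeroE}"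
      proof
        fix x assume x: "x \<in> nonzero_idempotents l be"
        then have "mk (x Bo) (x Ba) (x Bb) (x Bc) \<in> nonzero_idempotents l be" using all_mk[of x] by simp
        from fwd[OF assms(1,2) this] have "mk (x Bo) (x Ba) (x Bb) (x Bc) \<in> ?F \<union> {jeps l be 0, jeps l be 1}" by blast
        then show "x \<in> (?F \<union> {jeps l be 0, jeps l be 1}) - {zeroE}" using all_mk[of x] x Z by auto
      qed
      show "(?F \<union> {jeps l be 0, jeps l be 1}) - {zeroE} \<subseteq> nonzero_idempotents l be"
        using F J[of 0] J[of 1] by auto
    qed
  qed
  show ?thesis using A B by (simp add: insert_commute)
qed

end
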